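(* Let $\alpha>0$, $\beta>0$, $D>0$, integers $T\ge1$ and $W\ge0$, and $2D\le L_T\le DT$. Let $X=[-D/2,D/2]$ and $x_0=0$. Set $\Delta=\lceil T/\lfloor L_T/D\rfloor\rceil$ and $K=\lceil T/\Delta\rceil$. Let $\theta_{k\Delta+1}$, $k=0,\dots,K-1$, be i.i.d. with $\mathbb P(\theta=D/2)=\mathbb P(\theta=-D/2)=1/2$, and let $\theta_t=\theta_{k\Delta+1}$ for $k\Delta+2\le t\le\min(k\Delta+\Delta,T)$. Let $f_t(x)=\frac\alpha2(x-\theta_t)^2$, and let $x^*=\arg\min_{x\in X^T}\sum_{t=1}^T\big(f_t(x_t)+\frac\beta2(x_t-x_{t-1})^2\big)$. Let $J=\{1\le t\le T-W:\ t+W\equiv1\pmod\Delta\}$. Then for any online deterministic algorithm $\mathcal A$ with prediction window $W$, $$\mathbb E|x_t^{\mathcal A}-x_t^*|^2\ge\frac{a_{t,t+W}^2D^2}{4}\qquad\text{for all }t\in J,$$ where $a_{t,s}$ denotes the $(t,s)$ entry of $A=H^{-1}$.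
   Context: Online deterministic algorithm with prediction window $W$: $x_t^{\mathcal A}=\mathcal A_t(I_t)$, where $\mathcal A_t$ is a deterministic map and $I_t$ consists of fixed initial knowledge together with $f_1,\dots,f_{\min(t+W-1,T)}$. Thus $x_t^{\mathcal A}$ is a deterministic function of $\theta_1,\dots,\theta_{\min(t+W-1,T)}$. $H\in\mathbb R^{T\times T}$ is the symmetric tridiagonal matrix with diagonal entries $1+2\beta/\alpha$ (except the last, which is $1+\beta/\alpha$) and off-diagonal entries $-\beta/\alpha$. It is invertible, and $x^*=H^{-1}\theta$. *)

theory Defs
  imports Complex_Main "HOL-Library.FuncSet"
begin

text \<open>Vectors/matrices indexed by 1..T are represented as functions on nat
(values outside 1..T are irrelevant / zero).\<close>

definition Hmat :: "real \<Rightarrow> real \<Rightarrow> nat \<Rightarrow> nat \<Rightarrow> nat \<Rightarrow> real" where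
  "Hmat \<alpha> \<beta> T i j =
     (if i \<in> {1..T} \<and> j \<in> {1..T} then
        (if i = j then (if i = T then 1 + \<beta>/\<alpha> else 1 + 2*\<beta>/\<alpha>)
         else if i = j + 1 \<or> j = i + 1 then - \<beta>/\<alpha> else 0)
      else 0)"

definition Hinv :: "real \<Rightarrow> real \<Rightarrow> nat \<Rightarrow> nat \<Rightarrow> nat \<Rightarrow> real" where
  "Hinv \<alpha> \<beta> T = (THE A. (\<forall>i j. A i j \<noteq> 0 \<longrightarrow> i \<in> {1..T} \<and> j \<in> {1..T}) \<and>
       (\<forall>i\<in>{1..T}. \<forall>j\<in>{1..T}. (\<Sum>k=1..T. Hmat \<alpha> \<beta> T i k * A k j) = (if i = j then 1 else 0)))"

definition total_cost :: "real \<Rightarrow> real \<Rightarrow> nat \<Rightarrow> (nat \<Rightarrow> real) \<Rightarrow> (nat \<Rightarrow> real) \<Rightarrow> real" where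
  "total_cost \<alpha> \<beta> T \<theta> x =
     (\<Sum>t=1..T. \<alpha>/2 * (x t - \<theta> t)^2 + \<beta>/2 * (x t - (if t = 1 then 0 else x (t-1)))^2)"

definition feasible :: "real \<Rightarrow> nat \<Rightarrow> (nat \<Rightarrow> real) set" where
  "feasible D T = {x. (\<forall>t\<in>{1..T}. \<bar>x t\<bar> \<le> D/2) \<and> (\<forall>t. t \<notin> {1..T} \<longrightarrow> x t = 0)}"

definition xstar :: "real \<Rightarrow> real \<Rightarrow> real \<Rightarrow> nat \<Rightarrow> (nat \<Rightarrow> real) \<Rightarrow> nat \<Rightarrow> real" where
  "xstar \<alpha> \<beta> D T \<theta> = (THE x. x \<in> feasible D T \<and>
      (\<forall>y\<in>feasible D T. total_cost \<alpha> \<beta> T \<theta> x \<le> total_cost \<alpha> \<beta> T \<theta> y))"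

definition online_alg :: "nat \<Rightarrow> nat \<Rightarrow> (nat \<Rightarrow> (nat \<Rightarrow> real) \<Rightarrow> real) \<Rightarrow> bool" where
  "online_alg T W alg \<longleftrightarrow> (\<forall>t \<theta> \<theta>'. (\<forall>s\<in>{1..min (t+W-1) T}. \<theta> s = \<theta>' s) \<longrightarrow> alg t \<theta> = alg t \<theta>')"

definition Delta :: "real \<Rightarrow> real \<Rightarrow> nat \<Rightarrow> nat" where
  "Delta D L T = nat \<lceil>real T / real_of_int \<lfloor>L / D\<rfloor>\<rceil>"

definition Kblocks :: "real \<Rightarrow> real \<Rightarrow> nat \<Rightarrow> nat" where
  "Kblocks D L T = nat \<lceil>real T / real (Delta D L T)\<rceil>"

definition theta_of :: "real \<Rightarrow> nat \<Rightarrow> nat \<Rightarrow> (nat \<Rightarrow> bool) \<Rightarrow> nat \<Rightarrow> real" where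
  "theta_of D T \<Delta> \<sigma> t =
     (if t \<in> {1..T} then (if \<sigma> ((t - 1) div \<Delta>) then D/2 else - D/2) else 0)"

text \<open>Expectation over K i.i.d. uniform signs: uniform average over all sign vectors.\<close>
definition sign_expect :: "nat \<Rightarrow> ((nat \<Rightarrow> bool) \<Rightarrow> real) \<Rightarrow> real" where
  "sign_expect K g = (\<Sum>\<sigma>\<in>PiE {..<K} (\<lambda>_. UNIV). g \<sigma>) / 2 ^ K"

end

theory Submission
  imports Defs
begin

definition R :: "real \<Rightarrow> nat \<Rightarrow> (nat \<Rightarrow> real) \<Rightarrow> nat \<Rightarrow> real" where
 "R c T x i = x i + c*(x i - x (i-1)) + (if i < T then c*(x i - x (i+1)) else 0)"

lemma Hsum:
  assumes "\<alpha> > 0" "i \<in> {1..T}" "x 0 = 0"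
  shows "(\<Sum>k=1..T. Hmat \<alpha> \<beta> T i k * x k) = R (\<beta>/\<alpha>) T x i"
proof -
  have eq: "Hmat \<alpha> \<beta> T i k * x k = (if k = i then (if i = T then 1 + \<beta>/\<alpha> else 1 + 2*\<beta>/\<alpha>) * x i else 0)
     + (if k = i - 1 then -\<beta>/\<alpha> * x k else 0) + (if k = i+1 then -\<beta>/\<alpha> * x k else 0)" if "k \<in> {1..T}" for k
    using that assms by (auto simp: Hmat_def)
  have "(\<Sum>k=1..T. Hmat \<alpha> \<beta> T i k * x k) = (\<Sum>k=1..T. (if k = i then (if i = T then 1 + \<beta>/\<alpha> else 1 + 2*\<beta>/\<alpha>) * x i else 0)
     + (if k = i - 1 then -\<beta>/\<alpha> * x k else 0) + (if k = i+1 then -\<beta>/\<alpha> * x k else 0))"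
    using eq by (rule sum.cong[OF refl])
  also have "\<dots> = (if i = T then 1 + \<beta>/\<alpha> else 1 + 2*\<beta>/\<alpha>) * x i + (if i - 1 \<in> {1..T} then -\<beta>/\<alpha> * x (i-1) else 0)
      + (if i+1 \<in> {1..T} then -\<beta>/\<alpha> * x (i+1) else 0)"
    using assms by (simp add: sum.distrib)
  also have "\<dots> = R (\<beta>/\<alpha>) T x i"
  proof -
    have c1: "(if i - 1 \<in> {1..T} then -\<beta>/\<alpha> * x (i-1) else 0) = -\<beta>/\<alpha> * x (i-1)"
      using assms by (cases "i = 1") auto
    have c2: "(if i+1 \<in> {1..T} then -\<beta>/\<alpha> * x (i+1) else 0) = (if i < T then -\<beta>/\<alpha> * x (i+1) else 0)"
      using assms by auto
    show ?thesis unfolding c1 c2 using assms by (cases "i < T") (simp_all add: R_def algebra_simps)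
  qed
  finally show ?thesis .
qed

lemma MP:
  assumes "c > 0" "x 0 = 0" "B \<ge> 0" "\<forall>i\<in>{1..T}. R c T x i \<le> B"
  shows "\<forall>i\<in>{1..T}. x i \<le> B"
proof (rule ccontr)
  assume "\<not> ?thesis"
  then obtain j where j: "j\<in>{1..T}" "x j > B" by auto
  define m where "m = Max (x ` {1..T})"
  have "m \<in> x ` {1..T}" using j unfolding m_def by (intro Max_in) auto
  then obtain i where i: "i\<in>{1..T}" "x i = m" by auto
  have mx: "\<forall>k\<in>{1..T}. x k \<le> x i" using i unfolding m_def by auto
  have "x j \<le> x i" using mx j(1) by blast
  then have xi: "x i > B" using j(2) by linarith
  have a: "x (i-1) \<le> x i"
  proof (cases "i = 1")
    case True then show ?thesis using assms xi by simp
  next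
    case False
    then have "i - 1 \<in> {1..T}" using i by auto
    then show ?thesis using mx by blast
  qed
  have b: "c*(x i - x (i+1)) \<ge> 0" if "i < T"
    using that mx assms by (intro mult_nonneg_nonneg) auto
  have a': "c*(x i - x(i-1)) \<ge> 0" using a assms(1) by simp
  have b': "(if i<T then c*(x i - x(i+1)) else 0) \<ge> 0" using b by simp
  have "R c T x i \<ge> x i" unfolding R_def using a' b' by linarith
  moreover have "R c T x i \<le> B" using assms(4) i(1) by blast
  ultimately show False using xi by linarith
qed

lemma R_diff: "R c T (\<lambda>k. f k - g k) i = R c T f i - R c T g i"
  by (simp add: R_def algebra_simps)
lemma R_neg: "R c T (\<lambda>k. - f k) i = - R c T f i"
  by (simp add: R_def algebra_simps)
lemma R_scale: "R c T (\<lambda>k. a * f k) i = a * R c T f i"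
  by (simp add: R_def algebra_simps)
lemma R_sum: "R c T (\<lambda>k. \<Sum>s\<in>S. f s k) i = (\<Sum>s\<in>S. R c T (f s) i)"
  by (cases "i < T") (simp_all add: R_def sum.distrib sum_subtractf sum_distrib_left right_diff_distrib sum_negf)

lemma MP_abs:
  assumes "c > 0" "x 0 = 0" "B \<ge> 0" "\<forall>i\<in>{1..T}. \<bar>R c T x i\<bar> \<le> B"
  shows "\<forall>i\<in>{1..T}. \<bar>x i\<bar> \<le> B"
proof -
  have r1: "\<forall>i\<in>{1..T}. R c T x i \<le> B" using assms(4) by (simp add: abs_le_iff)
  have 1: "\<forall>i\<in>{1..T}. x i \<le> B" using MP[OF assms(1,2,3) r1] .
  have r2: "\<forall>i\<in>{1..T}. R c T (\<lambda>k. - x k) i \<le> B" using assms(4) by (simp add: R_neg abs_le_iff)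
  have x0: "(\<lambda>k. - x k) 0 = 0" using assms(2) by simp
  have "\<forall>i\<in>{1..T}. - x i \<le> B" using MP[OF assms(1) x0 assms(3) r2] by simp
  with 1 show ?thesis by (simp add: abs_le_iff)
qed

lemma MP_nonneg:
  assumes "c > 0" "x 0 = 0" "\<forall>i\<in>{1..T}. R c T x i \<ge> 0"
  shows "\<forall>i\<in>{1..T}. x i \<ge> 0"
proof -
  have r2: "\<forall>i\<in>{1..T}. R c T (\<lambda>k. - x k) i \<le> 0" using assms(3) by (simp add: R_neg)
  have x0: "(\<lambda>k. - x k) 0 = 0" using assms(2) by simp
  show ?thesis using MP[OF assms(1) x0 _ r2] by simp
qed

lemma MP_zero:
  assumes "c > 0" "x 0 = 0" "\<forall>i\<in>{1..T}. R c T x i = 0"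
  shows "\<forall>i\<in>{1..T}. x i = 0"
proof -
  have "\<forall>i\<in>{1..T}. \<bar>R c T x i\<bar> \<le> 0" using assms(3) by simp
  from MP_abs[OF assms(1,2) _ this] show ?thesis by simp
qed

fun gg :: "real \<Rightarrow> nat \<Rightarrow> real" where
  "gg c 0 = 0" | "gg c (Suc i) = c / (1 + 2*c - c * gg c i)"
fun hh :: "real \<Rightarrow> (nat \<Rightarrow> real) \<Rightarrow> nat \<Rightarrow> real" where
  "hh c \<theta> 0 = 0" | "hh c \<theta> (Suc i) = (\<theta> (Suc i) + c * hh c \<theta> i) / (1 + 2*c - c * gg c i)"
fun yy :: "real \<Rightarrow> nat \<Rightarrow> (nat \<Rightarrow> real) \<Rightarrow> nat \<Rightarrow> real" where
  "yy c T \<theta> 0 = (\<theta> T + c * hh c \<theta> (T-1)) / (1 + c - c * gg c (T-1))"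
| "yy c T \<theta> (Suc n) = gg c (T - Suc n) * yy c T \<theta> n + hh c \<theta> (T - Suc n)"
definition sol :: "real \<Rightarrow> nat \<Rightarrow> (nat \<Rightarrow> real) \<Rightarrow> nat \<Rightarrow> real" where
  "sol c T \<theta> i = (if i \<in> {1..T} then yy c T \<theta> (T - i) else 0)"

lemma gg_bounds: "c > 0 \<Longrightarrow> 0 \<le> gg c i \<and> gg c i < 1"
proof (induction i)
  case 0 then show ?case by simp
next
  case (Suc i)
  have "c * gg c i < c" using Suc by simp
  then have d: "1 + 2*c - c * gg c i > 1 + c" by simp
  define den where "den = 1 + 2*c - c * gg c i"
  have "den > c" "den > 0" using d Suc.prems unfolding den_def by linarith+
  then have "0 \<le> c / den \<and> c / den < 1" using Suc.prems by auto
  then show ?case by (simp add: den_def)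
qed

lemma sol_rec: assumes "i < T" shows "sol c T \<theta> i = gg c i * sol c T \<theta> (i+1) + hh c \<theta> i"
proof (cases "i = 0")
  case True then show ?thesis by (simp add: sol_def)
next
  case False
  have "T - i = Suc (T - Suc i)" using assms by simp
  then show ?thesis using assms False by (simp add: sol_def)
qed

lemma sol_R: assumes "c > 0" "i \<in> {1..T}" shows "R c T (sol c T \<theta>) i = \<theta> i"
proof (cases "i < T")
  case True
  define g0 where "g0 = gg c (i-1)"
  define h0 where "h0 = hh c \<theta> (i-1)"
  define q where "q = 1 + 2*c - c * g0"
  have "c * g0 < c" using gg_bounds[OF assms(1), of "i-1"] assms by (simp add: g0_def)
  then have q: "q > 0" unfolding q_def using assms(1) by linarith
  have ii: "i = Suc (i-1)" using assms by simp
  have gi: "gg c i = c / q" by (subst ii) (simp add: q_def g0_def)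
  have hi: "hh c \<theta> i = (\<theta> i + c*h0)/q" by (subst ii, subst (2) ii) (simp add: q_def g0_def h0_def)
  have s: "sol c T \<theta> i = c/q * sol c T \<theta> (i+1) + (\<theta> i + c*h0)/q"
    using sol_rec[OF True, of c \<theta>] gi hi by simp
  have e1: "q * (c/q) = c" "q*((\<theta> i + c*h0)/q) = \<theta> i + c*h0" using q by auto
  have "q * sol c T \<theta> i = q * (c/q) * sol c T \<theta> (i+1) + q*((\<theta> i + c*h0)/q)"
    unfolding s by (simp only: distrib_left mult.assoc)
  then have qs: "q * sol c T \<theta> i = c * sol c T \<theta> (i+1) + \<theta> i + c*h0"
    unfolding e1 by simp
  have sm: "sol c T \<theta> (i-1) = g0 * sol c T \<theta> i + h0"
    using sol_rec[of "i-1" T c \<theta>] True assms by (simp add: g0_def h0_def)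
  have "R c T (sol c T \<theta>) i = q * sol c T \<theta> i - c*h0 - c * sol c T \<theta> (i+1)"
    using True sm by (simp add: R_def q_def algebra_simps)
  then show ?thesis using qs by simp
next
  case False
  then have iT: "i = T" using assms by simp
  define g0 where "g0 = gg c (T-1)"
  define h0 where "h0 = hh c \<theta> (T-1)"
  have "c * g0 < c" using gg_bounds[OF assms(1), of "T-1"] assms by (simp add: g0_def)
  then have q: "1 + c - c*g0 > 0" using assms(1) by linarith
  have sT: "sol c T \<theta> T = (\<theta> T + c*h0)/(1 + c - c*g0)"
    using assms by (simp add: sol_def g0_def h0_def)
  then have qs: "(1 + c - c*g0) * sol c T \<theta> T = \<theta> T + c*h0" using q by (simp add: field_simps)
  have sm: "sol c T \<theta> (T-1) = g0 * sol c T \<theta> T + h0"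
    using sol_rec[of "T-1" T c \<theta>] assms iT by (simp add: g0_def h0_def)
  have "R c T (sol c T \<theta>) T = (1 + c - c*g0) * sol c T \<theta> T - c*h0"
    using sm by (simp add: R_def algebra_simps)
  then show ?thesis using qs iT by simp
qed


definition Amat :: "real \<Rightarrow> nat \<Rightarrow> nat \<Rightarrow> nat \<Rightarrow> real" where
  "Amat c T t j = (if j \<in> {1..T} then sol c T (\<lambda>s. if s = j then 1 else 0) t else 0)"

lemma Amat_supp: "Amat c T t j \<noteq> 0 \<Longrightarrow> t \<in> {1..T} \<and> j \<in> {1..T}"
  by (auto simp: Amat_def sol_def split: if_splits)

lemma Amat_R: assumes "c > 0" "i \<in> {1..T}" "j \<in> {1..T}"
  shows "R c T (\<lambda>k. Amat c T k j) i = (if i = j then 1 else 0)"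
  using sol_R[OF assms(1,2), of "\<lambda>s. if s = j then 1 else 0"] assms(3) by (simp add: Amat_def)

lemma Amat_nonneg: assumes "c > 0" shows "Amat c T t j \<ge> 0"
proof (cases "t \<in> {1..T} \<and> j \<in> {1..T}")
  case True
  have a0: "Amat c T 0 j = 0" using Amat_supp[of c T 0 j] by auto
  have a1: "\<forall>i\<in>{1..T}. R c T (\<lambda>k. Amat c T k j) i \<ge> 0" using Amat_R[OF assms] True by simp
  have "\<forall>i\<in>{1..T}. Amat c T i j \<ge> 0"
    using MP_nonneg[of c "\<lambda>k. Amat c T k j" T] assms a0 a1 by blast
  then show ?thesis using True by auto
next
  case False
  then have "Amat c T t j = 0" using Amat_supp by blast
  then show ?thesis by simp
qed

lemma Hinv_eq: assumes "\<alpha> > 0" "\<beta> > 0" shows "Hinv \<alpha> \<beta> T = Amat (\<beta>/\<alpha>) T"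
  unfolding Hinv_def
proof (rule the_equality, goal_cases)
  case 1
  have c: "\<beta>/\<alpha> > 0" using assms by simp
  have X: "(\<forall>i j. Amat (\<beta>/\<alpha>) T i j \<noteq> 0 \<longrightarrow> i \<in> {1..T} \<and> j \<in> {1..T}) \<and>
       (\<forall>i\<in>{1..T}. \<forall>j\<in>{1..T}. (\<Sum>k=1..T. Hmat \<alpha> \<beta> T i k * Amat (\<beta>/\<alpha>) T k j) = (if i = j then 1 else 0))"
  proof (rule conjI)
    show "\<forall>i j. Amat (\<beta>/\<alpha>) T i j \<noteq> 0 \<longrightarrow> i \<in> {1..T} \<and> j \<in> {1..T}" using Amat_supp by blast
  next
    show "\<forall>i\<in>{1..T}. \<forall>j\<in>{1..T}. (\<Sum>k=1..T. Hmat \<alpha> \<beta> T i k * Amat (\<beta>/\<alpha>) T k j) = (if i = j then 1 else 0)"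
    proof (intro ballI)
    fix i j assume ij: "i \<in> {1..T}" "j \<in> {1..T}"
    have "Amat (\<beta>/\<alpha>) T 0 j = 0" using Amat_supp[of "\<beta>/\<alpha>" T 0 j] by auto
    then show "(\<Sum>k=1..T. Hmat \<alpha> \<beta> T i k * Amat (\<beta>/\<alpha>) T k j) = (if i = j then 1 else 0)"
      using Hsum[where x="\<lambda>k. Amat (\<beta>/\<alpha>) T k j" and \<beta>=\<beta>, OF assms(1) ij(1)] Amat_R[OF c ij] by simp
  qed
  qed
  then show ?case by simp
next
  case (2 A)
  then have A: "(\<forall>i j. A i j \<noteq> 0 \<longrightarrow> i \<in> {1..T} \<and> j \<in> {1..T}) \<and>
       (\<forall>i\<in>{1..T}. \<forall>j\<in>{1..T}. (\<Sum>k=1..T. Hmat \<alpha> \<beta> T i k * A k j) = (if i = j then 1 else 0))"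
    by simp
  have c: "\<beta>/\<alpha> > 0" using assms by simp
  show "A = Amat (\<beta>/\<alpha>) T"
  proof (intro ext)
    fix i j
    show "A i j = Amat (\<beta>/\<alpha>) T i j"
    proof (cases "i \<in> {1..T} \<and> j \<in> {1..T}")
      case False
      have "A i j = 0" using A False by blast
      moreover have "Amat (\<beta>/\<alpha>) T i j = 0" using Amat_supp False by blast
      ultimately show ?thesis by simp
    next
      case True
      define x where "x = (\<lambda>k. A k j - Amat (\<beta>/\<alpha>) T k j)"
      have supp: "\<forall>i j. A i j \<noteq> 0 \<longrightarrow> i \<in> {1..T} \<and> j \<in> {1..T}" using A by (rule conjunct1)
      have A0: "A 0 j = 0" using supp[rule_format, of 0 j] by auto
      have M0: "Amat (\<beta>/\<alpha>) T 0 j = 0" using Amat_supp[of "\<beta>/\<alpha>" T 0 j] by auto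
      have x0: "x 0 = 0" using A0 M0 by (simp add: x_def)
      have "\<forall>i\<in>{1..T}. R (\<beta>/\<alpha>) T x i = 0"
      proof
        fix i assume i: "i \<in> {1..T}"
        have h1: "(\<Sum>k=1..T. Hmat \<alpha> \<beta> T i k * A k j) = (if i = j then 1 else 0)"
          using A i True by blast
        have "R (\<beta>/\<alpha>) T (\<lambda>k. A k j) i = (if i = j then 1 else 0)"
          using Hsum[where x="\<lambda>k. A k j" and \<beta>=\<beta>, OF assms(1) i A0] h1 by simp
        then show "R (\<beta>/\<alpha>) T x i = 0" unfolding x_def R_diff using Amat_R[OF c i] True by simp
      qed
      then have "\<forall>i\<in>{1..T}. x i = 0" using MP_zero[of "\<beta>/\<alpha>" x T] c x0 by blast
      then show ?thesis using True by (simp add: x_def)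
    qed
  qed
qed

definition zz :: "real \<Rightarrow> nat \<Rightarrow> (nat \<Rightarrow> real) \<Rightarrow> nat \<Rightarrow> real" where
  "zz c T \<theta> t = (\<Sum>s=1..T. Amat c T t s * \<theta> s)"

lemma zz_supp: "t \<notin> {1..T} \<Longrightarrow> zz c T \<theta> t = 0"
  unfolding zz_def by (rule sum.neutral) (use Amat_supp[of c T t] in auto)

lemma zz_R: assumes "c > 0" "i \<in> {1..T}" shows "R c T (zz c T \<theta>) i = \<theta> i"
proof -
  have "R c T (zz c T \<theta>) i = (\<Sum>s=1..T. R c T (\<lambda>t. \<theta> s * Amat c T t s) i)"
    unfolding zz_def by (subst R_sum[symmetric]) (simp add: mult.commute)
  also have "\<dots> = (\<Sum>s=1..T. \<theta> s * (if i = s then 1 else 0))"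
    by (rule sum.cong[OF refl]) (simp add: R_scale Amat_R[OF assms])
  also have "\<dots> = \<theta> i" using assms(2) by (simp add: if_distrib cong: if_cong)
  finally show ?thesis .
qed

lemma sbp:
  fixes z e :: "nat \<Rightarrow> real"
  assumes "e 0 = 0"
  shows "(\<Sum>t=1..n. (z t - z (t-1)) * (e t - e (t-1))) =
         (\<Sum>t=1..n. e t * (2 * z t - z (t-1) - z (t+1))) + e n * (z (n+1) - z n)"
proof (induction n)
  case 0 then show ?case using assms by simp
next
  case (Suc n) then show ?case by (simp add: algebra_simps)
qed

lemma sbp2:
  fixes z e :: "nat \<Rightarrow> real"
  assumes "e 0 = 0"
  shows "(\<Sum>t=1..T. (z t - z (t-1)) * (e t - e (t-1))) =
         (\<Sum>t=1..T. e t * ((z t - z (t-1)) + (if t < T then z t - z (t+1) else 0)))"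
proof -
  have "(\<Sum>t=1..T. e t * (2 * z t - z (t-1) - z (t+1))) =
        (\<Sum>t=1..T. e t * ((z t - z (t-1)) + (if t < T then z t - z (t+1) else 0)) + (if t = T then e t * (z t - z (t+1)) else 0))"
    by (rule sum.cong[OF refl]) (auto simp: algebra_simps)
  also have "\<dots> = (\<Sum>t=1..T. e t * ((z t - z (t-1)) + (if t < T then z t - z (t+1) else 0))) + (if T \<ge> 1 then e T * (z T - z (T+1)) else 0)"
    by (simp add: sum.distrib)
  finally show ?thesis using sbp[of e z T] assms by (cases "T = 0") (auto simp: algebra_simps)
qed

lemma cost_alt: assumes "x 0 = 0"
  shows "total_cost \<alpha> \<beta> T \<theta> x = (\<Sum>t=1..T. \<alpha>/2 * (x t - \<theta> t)^2 + \<beta>/2 * (x t - x (t-1))^2)"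
  unfolding total_cost_def using assms by (intro sum.cong) auto

lemma cost_ineq:
  assumes "\<alpha> > 0" "\<beta> > 0" "z 0 = 0" "y 0 = 0" "\<forall>i\<in>{1..T}. R (\<beta>/\<alpha>) T z i = \<theta> i"
  shows "total_cost \<alpha> \<beta> T \<theta> y - total_cost \<alpha> \<beta> T \<theta> z \<ge> \<alpha>/2 * (\<Sum>t=1..T. (y t - z t)^2)"
proof -
  define e where "e = (\<lambda>t. y t - z t)"
  have e0: "e 0 = 0" using assms by (simp add: e_def)
  have pt: "(\<alpha>/2*(y t - \<theta> t)^2 + \<beta>/2*(y t - y(t-1))^2) - (\<alpha>/2*(z t - \<theta> t)^2 + \<beta>/2*(z t - z(t-1))^2)
     \<ge> \<alpha>*(z t - \<theta> t)*e t + \<beta>*((z t - z(t-1))*(e t - e(t-1))) + \<alpha>/2*(e t)^2" for t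
  proof -
    have "(\<alpha>/2*(y t - \<theta> t)^2 + \<beta>/2*(y t - y(t-1))^2) - (\<alpha>/2*(z t - \<theta> t)^2 + \<beta>/2*(z t - z(t-1))^2)
      - (\<alpha>*(z t - \<theta> t)*e t + \<beta>*((z t - z(t-1))*(e t - e(t-1))) + \<alpha>/2*(e t)^2) = \<beta>/2*(e t - e(t-1))^2"
      by (simp add: e_def power2_eq_square algebra_simps)
    moreover have "\<beta>/2*(e t - e(t-1))^2 \<ge> 0" using assms by simp
    ultimately show ?thesis by linarith
  qed
  have zero: "(\<Sum>t=1..T. \<alpha>*(z t - \<theta> t)*e t + \<beta>*((z t - z(t-1))*(e t - e(t-1)))) = 0"
  proof -
    have "(\<Sum>t=1..T. \<alpha>*(z t - \<theta> t)*e t + \<beta>*((z t - z(t-1))*(e t - e(t-1))))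
       = (\<Sum>t=1..T. \<alpha>*(z t - \<theta> t)*e t) + \<beta> * (\<Sum>t=1..T. (z t - z (t-1)) * (e t - e (t-1)))"
      by (simp add: sum.distrib sum_distrib_left)
    also have "\<dots> = (\<Sum>t=1..T. \<alpha>*(z t - \<theta> t)*e t) + \<beta> * (\<Sum>t=1..T. e t * ((z t - z (t-1)) + (if t < T then z t - z (t+1) else 0)))"
      using sbp2[of e z T] e0 by simp
    also have "\<dots> = (\<Sum>t=1..T. \<alpha>*(z t - \<theta> t)*e t + \<beta> * (e t * ((z t - z (t-1)) + (if t < T then z t - z (t+1) else 0))))"
      by (simp add: sum.distrib sum_distrib_left)
    also have "\<dots> = 0"
    proof (rule sum.neutral, rule ballI)
      fix t assume t: "t \<in> {1..T}"
      define F where "F = (z t - z (t-1)) + (if t < T then z t - z (t+1) else 0)"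
      have aR: "\<alpha> * R (\<beta>/\<alpha>) T z t = \<alpha> * z t + \<beta> * F"
        using assms(1) by (cases "t < T") (simp_all add: R_def F_def field_simps)
      have Rt: "R (\<beta>/\<alpha>) T z t = \<theta> t" using assms(5) t by blast
      have "\<alpha>*(z t - \<theta> t)*e t + \<beta> * (e t * F) = e t * (\<alpha> * R (\<beta>/\<alpha>) T z t - \<alpha> * \<theta> t)"
        unfolding aR by (simp add: algebra_simps)
      also have "\<dots> = 0" using Rt by simp
      finally show "\<alpha>*(z t - \<theta> t)*e t + \<beta> * (e t * ((z t - z (t-1)) + (if t < T then z t - z (t+1) else 0))) = 0"
        by (simp add: F_def)
    qed
    finally show ?thesis .
  qed
  have "total_cost \<alpha> \<beta> T \<theta> y - total_cost \<alpha> \<beta> T \<theta> z =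
     (\<Sum>t=1..T. (\<alpha>/2*(y t - \<theta> t)^2 + \<beta>/2*(y t - y(t-1))^2) - (\<alpha>/2*(z t - \<theta> t)^2 + \<beta>/2*(z t - z(t-1))^2))"
    using assms by (simp add: cost_alt sum_subtractf)
  also have "\<dots> \<ge> (\<Sum>t=1..T. \<alpha>*(z t - \<theta> t)*e t + \<beta>*((z t - z(t-1))*(e t - e(t-1))) + \<alpha>/2*(e t)^2)"
    by (rule sum_mono) (rule pt)
  finally have "total_cost \<alpha> \<beta> T \<theta> y - total_cost \<alpha> \<beta> T \<theta> z \<ge>
     (\<Sum>t=1..T. \<alpha>*(z t - \<theta> t)*e t + \<beta>*((z t - z(t-1))*(e t - e(t-1)))) + (\<Sum>t=1..T. \<alpha>/2*(e t)^2)"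
    by (simp add: sum.distrib)
  then show ?thesis using zero by (simp add: e_def sum_distrib_left)
qed

lemma xstar_eq:
  assumes "\<alpha> > 0" "\<beta> > 0" "D > 0" "\<forall>t\<in>{1..T}. \<bar>\<theta> t\<bar> \<le> D/2"
  shows "xstar \<alpha> \<beta> D T \<theta> = zz (\<beta>/\<alpha>) T \<theta>"
  unfolding xstar_def
proof (rule the_equality)
  have c: "\<beta>/\<alpha> > 0" using assms by simp
  have z0: "zz (\<beta>/\<alpha>) T \<theta> 0 = 0" by (simp add: zz_supp)
  have zR: "\<forall>i\<in>{1..T}. R (\<beta>/\<alpha>) T (zz (\<beta>/\<alpha>) T \<theta>) i = \<theta> i" using zz_R[OF c] by blast
  have zf: "zz (\<beta>/\<alpha>) T \<theta> \<in> feasible D T"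
  proof -
    have "\<forall>i\<in>{1..T}. \<bar>zz (\<beta>/\<alpha>) T \<theta> i\<bar> \<le> D/2"
      using MP_abs[of "\<beta>/\<alpha>" "zz (\<beta>/\<alpha>) T \<theta>" "D/2" T] c z0 assms zR by auto
    then show ?thesis unfolding feasible_def using zz_supp by blast
  qed
  show "zz (\<beta>/\<alpha>) T \<theta> \<in> feasible D T \<and>
    (\<forall>y\<in>feasible D T. total_cost \<alpha> \<beta> T \<theta> (zz (\<beta>/\<alpha>) T \<theta>) \<le> total_cost \<alpha> \<beta> T \<theta> y)"
  proof (intro conjI ballI zf)
    fix y assume "y \<in> feasible D T"
    then have y0: "y 0 = 0" by (simp add: feasible_def)
    have "0 \<le> \<alpha>/2 * (\<Sum>t=1..T. (y t - zz (\<beta>/\<alpha>) T \<theta> t)^2)" using assms by (simp add: sum_nonneg)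
    then show "total_cost \<alpha> \<beta> T \<theta> (zz (\<beta>/\<alpha>) T \<theta>) \<le> total_cost \<alpha> \<beta> T \<theta> y"
      using cost_ineq[of \<alpha> \<beta> "zz (\<beta>/\<alpha>) T \<theta>" y T \<theta>] assms z0 y0 zR by linarith
  qed
  fix x assume x: "x \<in> feasible D T \<and> (\<forall>y\<in>feasible D T. total_cost \<alpha> \<beta> T \<theta> x \<le> total_cost \<alpha> \<beta> T \<theta> y)"
  then have x0: "x 0 = 0" by (simp add: feasible_def)
  have le: "total_cost \<alpha> \<beta> T \<theta> x \<le> total_cost \<alpha> \<beta> T \<theta> (zz (\<beta>/\<alpha>) T \<theta>)" using x zf by blast
  have "\<alpha>/2 * (\<Sum>t=1..T. (x t - zz (\<beta>/\<alpha>) T \<theta> t)^2) \<le> 0"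
    using cost_ineq[of \<alpha> \<beta> "zz (\<beta>/\<alpha>) T \<theta>" x T \<theta>] assms z0 x0 zR le by linarith
  then have "(\<Sum>t=1..T. (x t - zz (\<beta>/\<alpha>) T \<theta> t)^2) \<le> 0" using assms(1)
    by (simp add: mult_le_0_iff)
  then have "(\<Sum>t=1..T. (x t - zz (\<beta>/\<alpha>) T \<theta> t)^2) = 0"
    by (meson order_antisym sum_nonneg zero_le_power2)
  then have "\<forall>t\<in>{1..T}. (x t - zz (\<beta>/\<alpha>) T \<theta> t)^2 = 0"
    by (subst (asm) sum_nonneg_eq_0_iff) auto
  then have sq: "\<forall>t\<in>{1..T}. x t = zz (\<beta>/\<alpha>) T \<theta> t" by simp
  show "x = zz (\<beta>/\<alpha>) T \<theta>"
  proof (rule ext)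
    fix t show "x t = zz (\<beta>/\<alpha>) T \<theta> t"
    proof (cases "t \<in> {1..T}")
      case True then show ?thesis using sq by blast
    next
      case False then show ?thesis using x zz_supp[OF False] unfolding feasible_def by simp
    qed
  qed
qed


lemma pair_ineq: "((u::real) - p)^2 + (u - q)^2 \<ge> (p - q)^2 / 2"
proof -
  have "2*((u - p)^2 + (u - q)^2) - (p - q)^2 = (2*u - p - q)^2" by (simp add: power2_eq_square algebra_simps)
  moreover have "(2*u - p - q)^2 \<ge> 0" by simp
  ultimately have "(p - q)^2 \<le> 2*((u - p)^2 + (u - q)^2)" by linarith
  then show ?thesis by (simp add: field_simps)
qed

theorem lemma6:
  fixes \<alpha> \<beta> D L :: real and T W :: nat
    and alg :: "nat \<Rightarrow> (nat \<Rightarrow> real) \<Rightarrow> real"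
  assumes "\<alpha> > 0" and "\<beta> > 0" and "D > 0" and "T \<ge> 1"
    and "2 * D \<le> L" and "L \<le> D * real T"
    and "online_alg T W alg"
  shows "\<forall>t \<in> {t. 1 \<le> t \<and> t \<le> T - W \<and> (t + W) mod Delta D L T = 1 mod Delta D L T}.
           sign_expect (Kblocks D L T)
             (\<lambda>\<sigma>. (alg t (theta_of D T (Delta D L T) \<sigma>)
                    - xstar \<alpha> \<beta> D T (theta_of D T (Delta D L T) \<sigma>) t)^2)
           \<ge> (Hinv \<alpha> \<beta> T t (t + W))^2 * D^2 / 4"
proof (intro ballI)
  fix t assume "t \<in> {t. 1 \<le> t \<and> t \<le> T - W \<and> (t + W) mod Delta D L T = 1 mod Delta D L T}"
  then have t1: "1 \<le> t" and tT: "t \<le> T - W" and tm: "(t + W) mod Delta D L T = 1 mod Delta D L T" by auto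
  define \<Delta> where "\<Delta> = Delta D L T"
  define K where "K = Kblocks D L T"
  define c where "c = \<beta>/\<alpha>"
  have c: "c > 0" using assms by (simp add: c_def)
  have "2 \<le> L / D" using assms by (simp add: le_divide_eq)
  then have fl: "2 \<le> \<lfloor>L / D\<rfloor>" by (simp add: le_floor_iff)
  have pos: "real T / real_of_int \<lfloor>L / D\<rfloor> > 0" using fl assms(4) by simp
  have "0 < real_of_int \<lceil>real T / real_of_int \<lfloor>L / D\<rfloor>\<rceil>"
    using le_of_int_ceiling[of "real T / real_of_int \<lfloor>L / D\<rfloor>"] pos by linarith
  then have Dpos: "\<Delta> > 0" by (simp add: \<Delta>_def Delta_def)
  have tW: "t + W \<le> T" using t1 tT by linarith
  have "\<Delta> dvd (t + W - 1)"
    using tm mod_eq_dvd_iff_nat[of 1 "t + W" \<Delta>] t1 by (simp add: \<Delta>_def)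
  define k where "k = (t + W - 1) div \<Delta>"
  have kD: "k * \<Delta> = t + W - 1" using \<open>\<Delta> dvd (t + W - 1)\<close> by (simp add: k_def)
  have "k * \<Delta> < T" using kD tW t1 by linarith
  then have "real k * real \<Delta> < real T" by (simp only: of_nat_mult[symmetric] of_nat_less_iff)
  then have "real k < real T / real \<Delta>" using Dpos by (simp add: field_simps)
  then have "int k < \<lceil>real T / real \<Delta>\<rceil>" by (simp add: less_ceiling_iff)
  then have kK: "k < K" unfolding K_def Kblocks_def \<Delta>_def[symmetric] by linarith
  define \<theta> where "\<theta> = (\<lambda>\<sigma>. theta_of D T \<Delta> \<sigma>)"
  have thb: "\<forall>s\<in>{1..T}. \<bar>\<theta> \<sigma> s\<bar> \<le> D/2" for \<sigma> using assms(3) by (simp add: \<theta>_def theta_of_def)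
  have xs: "xstar \<alpha> \<beta> D T (\<theta> \<sigma>) = zz c T (\<theta> \<sigma>)" for \<sigma>
    unfolding c_def by (rule xstar_eq[OF assms(1,2,3) thb])
  define a where "a = Amat c T t (t + W)"
  have a0: "a \<ge> 0" unfolding a_def by (rule Amat_nonneg[OF c])
  define g where "g = (\<lambda>\<sigma>. (alg t (\<theta> \<sigma>) - zz c T (\<theta> \<sigma>) t)^2)"
  define flp where "flp = (\<lambda>\<sigma>::nat \<Rightarrow> bool. \<sigma>(k := \<not> \<sigma> k))"
  have key: "g \<sigma> + g (flp \<sigma>) \<ge> a^2 * D^2 / 2" for \<sigma>
  proof -
    have same: "\<theta> \<sigma> s = \<theta> (flp \<sigma>) s" if s: "s \<in> {1..min (t+W-1) T}" for s
    proof -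
      have "s - 1 < k * \<Delta>" using s kD t1 by auto
      then have "(s - 1) div \<Delta> < k" by (rule less_mult_imp_div_less)
      then show ?thesis by (simp add: \<theta>_def theta_of_def flp_def)
    qed
    have algeq: "alg t (\<theta> \<sigma>) = alg t (\<theta> (flp \<sigma>))"
      using assms(7) same unfolding online_alg_def by blast
    have dth: "\<theta> \<sigma> s - \<theta> (flp \<sigma>) s = (if \<sigma> k then D else -D) * (if (s-1) div \<Delta> = k then 1 else 0)"
      if "s \<in> {1..T}" for s
      using that by (auto simp: \<theta>_def theta_of_def flp_def)
    define S where "S = (\<Sum>s=1..T. Amat c T t s * (if (s-1) div \<Delta> = k then 1 else 0))"
    have diff: "zz c T (\<theta> \<sigma>) t - zz c T (\<theta> (flp \<sigma>)) t = (if \<sigma> k then D else -D) * S"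
    proof -
      have "zz c T (\<theta> \<sigma>) t - zz c T (\<theta> (flp \<sigma>)) t = (\<Sum>s=1..T. Amat c T t s * (\<theta> \<sigma> s - \<theta> (flp \<sigma>) s))"
        by (simp add: zz_def sum_subtractf right_diff_distrib)
      also have "\<dots> = (\<Sum>s=1..T. (if \<sigma> k then D else -D) * (Amat c T t s * (if (s-1) div \<Delta> = k then 1 else 0)))"
        by (rule sum.cong[OF refl]) (simp add: dth)
      also have "\<dots> = (if \<sigma> k then D else -D) * S" by (simp add: S_def sum_distrib_left)
      finally show ?thesis .
    qed
    have "a \<le> S"
    proof -
      define f where "f = (\<lambda>s. Amat c T t s * (if (s-1) div \<Delta> = k then (1::real) else 0))"
      have "f (t+W) \<le> sum f {1..T}"
        by (rule member_le_sum) (use t1 tW Amat_nonneg[OF c] in \<open>auto simp: f_def\<close>)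
      then have "Amat c T t (t+W) * (if (t + W - 1) div \<Delta> = k then 1 else 0) \<le> S"
        by (simp add: f_def S_def)
      then show ?thesis by (simp add: a_def k_def)
    qed
    then have "a^2 \<le> S^2" using a0 by (simp add: power_mono)
    then have "a^2 * D^2 \<le> (zz c T (\<theta> \<sigma>) t - zz c T (\<theta> (flp \<sigma>)) t)^2"
      unfolding diff by (simp add: power_mult_distrib mult.commute mult_left_mono)
    moreover have "g \<sigma> + g (flp \<sigma>) \<ge> (zz c T (\<theta> \<sigma>) t - zz c T (\<theta> (flp \<sigma>)) t)^2 / 2"
      unfolding g_def algeq[symmetric] by (rule pair_ineq)
    ultimately show ?thesis by linarith
  qed
  define P where "P = PiE {..<K} (\<lambda>_. UNIV :: bool set)"
  have finP: "finite P" by (simp add: P_def finite_PiE)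
  have cardP: "card P = 2^K" by (simp add: P_def card_PiE)
  have flpP: "flp \<sigma> \<in> P" if "\<sigma> \<in> P" for \<sigma>
    using that kK by (auto simp: P_def flp_def PiE_def extensional_def)
  have flpflp: "flp (flp \<sigma>) = \<sigma>" for \<sigma> by (simp add: flp_def)
  have sw: "(\<Sum>\<sigma>\<in>P. g (flp \<sigma>)) = (\<Sum>\<sigma>\<in>P. g \<sigma>)"
    by (rule sum.reindex_bij_witness[where i=flp and j=flp]) (auto simp: flpflp flpP)
  have "2 * (\<Sum>\<sigma>\<in>P. g \<sigma>) = (\<Sum>\<sigma>\<in>P. g \<sigma> + g (flp \<sigma>))" using sw by (simp add: sum.distrib)
  also have "\<dots> \<ge> (\<Sum>\<sigma>\<in>P. a^2 * D^2 / 2)" by (rule sum_mono) (rule key)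
  finally have "2 * (\<Sum>\<sigma>\<in>P. g \<sigma>) \<ge> 2^K * (a^2 * D^2 / 2)" using cardP by simp
  then have main: "(\<Sum>\<sigma>\<in>P. g \<sigma>) / 2^K \<ge> a^2 * D^2 / 4" by (simp add: field_simps)
  have Hi: "Hinv \<alpha> \<beta> T t (t + W) = a" using Hinv_eq[OF assms(1,2)] by (simp add: a_def c_def)
  have gg: "(\<lambda>\<sigma>. (alg t (theta_of D T (Delta D L T) \<sigma>) - xstar \<alpha> \<beta> D T (theta_of D T (Delta D L T) \<sigma>) t)^2) = g"
    by (rule ext) (simp add: g_def xs[unfolded \<theta>_def \<Delta>_def] \<theta>_def \<Delta>_def)
  show "sign_expect (Kblocks D L T)
             (\<lambda>\<sigma>. (alg t (theta_of D T (Delta D L T) \<sigma>)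
                    - xstar \<alpha> \<beta> D T (theta_of D T (Delta D L T) \<sigma>) t)^2)
           \<ge> (Hinv \<alpha> \<beta> T t (t + W))^2 * D^2 / 4"
    unfolding gg Hi sign_expect_def K_def[symmetric] P_def[symmetric] using main by simp
qed

end
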